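(* Let $n\ge 3$ and let $p(q)=q^n+a_{n-2}q^{n-2}+\dots+a_1q+a_0$ with $a_0,\dots,a_{n-2}\in\mathbb{H}$ and $a_{n-2}\neq 0$. Put $\lambda=\big(\max_{0\le j\le n-2}|a_j|\big)^{1/n}$. Then every zero $q\in\mathbb{H}$ of $p$ satisfies $$|q|\le \lambda+\lambda^2+\lambda^3+\dots+\lambda^{n-1}.$$
   Context: $\mathbb{H}$ denotes the real quaternions with the Euclidean norm $|q|=\sqrt{q\bar q}$. The polynomial $p$ has coefficients written to the left of the powers and is evaluated at $q\in\mathbb{H}$ by direct substitution; a zero of $p$ is a $q\in\mathbb{H}$ with $p(q)=0$. *)

theory Defs
  imports Complex_Main
begin

codatatype quat = Quat (Re: real) (Im1: real) (Im2: real) (Im3: real)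

lemma quat_eqI [intro?]:
  "\<lbrakk>Re x = Re y; Im1 x = Im1 y; Im2 x = Im2 y; Im3 x = Im3 y\<rbrakk> \<Longrightarrow> x = y"
  by (rule quat.expand) simp

instantiation quat :: ring_1
begin

primcorec zero_quat where
  "Re 0 = 0" | "Im1 0 = 0" | "Im2 0 = 0" | "Im3 0 = 0"

primcorec one_quat where
  "Re 1 = 1" | "Im1 1 = 0" | "Im2 1 = 0" | "Im3 1 = 0"

primcorec plus_quat where
  "Re (x + y) = Re x + Re y" | "Im1 (x + y) = Im1 x + Im1 y"
| "Im2 (x + y) = Im2 x + Im2 y" | "Im3 (x + y) = Im3 x + Im3 y"

primcorec uminus_quat where
  "Re (- x) = - Re x" | "Im1 (- x) = - Im1 x"
| "Im2 (- x) = - Im2 x" | "Im3 (- x) = - Im3 x"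

primcorec minus_quat where
  "Re (x - y) = Re x - Re y" | "Im1 (x - y) = Im1 x - Im1 y"
| "Im2 (x - y) = Im2 x - Im2 y" | "Im3 (x - y) = Im3 x - Im3 y"

primcorec times_quat where
  "Re (a * b) = Re a * Re b - Im1 a * Im1 b - Im2 a * Im2 b - Im3 a * Im3 b"
| "Im1 (a * b) = Re a * Im1 b + Im1 a * Re b + Im2 a * Im3 b - Im3 a * Im2 b"
| "Im2 (a * b) = Re a * Im2 b - Im1 a * Im3 b + Im2 a * Re b + Im3 a * Im1 b"
| "Im3 (a * b) = Re a * Im3 b + Im1 a * Im2 b - Im2 a * Im1 b + Im3 a * Re b"

instance
  by standard (auto intro: quat_eqI simp: algebra_simps dest: arg_cong[where f=Re])

end

definition qnorm :: "quat \<Rightarrow> real" where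
  "qnorm q = sqrt ((Re q)\<^sup>2 + (Im1 q)\<^sup>2 + (Im2 q)\<^sup>2 + (Im3 q)\<^sup>2)"

end

theory Submission
  imports Defs
begin

lemma qnorm_mult: "qnorm (x * y) = qnorm x * qnorm y"
proof -
  have "(Re (x*y))\<^sup>2 + (Im1 (x*y))\<^sup>2 + (Im2 (x*y))\<^sup>2 + (Im3 (x*y))\<^sup>2
     = ((Re x)\<^sup>2 + (Im1 x)\<^sup>2 + (Im2 x)\<^sup>2 + (Im3 x)\<^sup>2) * ((Re y)\<^sup>2 + (Im1 y)\<^sup>2 + (Im2 y)\<^sup>2 + (Im3 y)\<^sup>2)"
    by (simp add: power2_eq_square algebra_simps)
  then show ?thesis unfolding qnorm_def by (simp add: real_sqrt_mult)
qed

lemma qnorm_nonneg: "qnorm x \<ge> 0" unfolding qnorm_def by simp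

lemma qnorm_zero [simp]: "qnorm 0 = 0" unfolding qnorm_def by simp
lemma qnorm_one [simp]: "qnorm 1 = 1" unfolding qnorm_def by simp
lemma qnorm_uminus [simp]: "qnorm (- x) = qnorm x" unfolding qnorm_def by simp

lemma qnorm_eq0: "qnorm x = 0 \<Longrightarrow> x = 0"
  unfolding qnorm_def
  by (rule quat_eqI) (auto simp: add_nonneg_eq_0_iff)

lemma cs4:
  fixes a1 a2 a3 a4 b1 b2 b3 b4 :: real
  shows "a1*b1+a2*b2+a3*b3+a4*b4 \<le> sqrt (a1\<^sup>2+a2\<^sup>2+a3\<^sup>2+a4\<^sup>2) * sqrt (b1\<^sup>2+b2\<^sup>2+b3\<^sup>2+b4\<^sup>2)"
proof -
  have "(a1*b1+a2*b2+a3*b3+a4*b4)\<^sup>2 \<le> (a1\<^sup>2+a2\<^sup>2+a3\<^sup>2+a4\<^sup>2) * (b1\<^sup>2+b2\<^sup>2+b3\<^sup>2+b4\<^sup>2)"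
  proof -
    have "(a1\<^sup>2+a2\<^sup>2+a3\<^sup>2+a4\<^sup>2) * (b1\<^sup>2+b2\<^sup>2+b3\<^sup>2+b4\<^sup>2) - (a1*b1+a2*b2+a3*b3+a4*b4)\<^sup>2
      = (a1*b2-a2*b1)\<^sup>2 + (a1*b3-a3*b1)\<^sup>2 + (a1*b4-a4*b1)\<^sup>2 + (a2*b3-a3*b2)\<^sup>2
        + (a2*b4-a4*b2)\<^sup>2 + (a3*b4-a4*b3)\<^sup>2"
      by (simp add: power2_eq_square algebra_simps)
    moreover have "0 \<le> (a1*b2-a2*b1)\<^sup>2 + (a1*b3-a3*b1)\<^sup>2 + (a1*b4-a4*b1)\<^sup>2 + (a2*b3-a3*b2)\<^sup>2
        + (a2*b4-a4*b2)\<^sup>2 + (a3*b4-a4*b3)\<^sup>2" by simp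
    ultimately show ?thesis by linarith
  qed
  then have "sqrt ((a1*b1+a2*b2+a3*b3+a4*b4)\<^sup>2) \<le> sqrt ((a1\<^sup>2+a2\<^sup>2+a3\<^sup>2+a4\<^sup>2) * (b1\<^sup>2+b2\<^sup>2+b3\<^sup>2+b4\<^sup>2))"
    using real_sqrt_le_mono by blast
  then show ?thesis by (simp add: real_sqrt_mult)
qed

lemma qnorm_triangle: "qnorm (x + y) \<le> qnorm x + qnorm y"
proof -
  define A where "A = (Re x)\<^sup>2 + (Im1 x)\<^sup>2 + (Im2 x)\<^sup>2 + (Im3 x)\<^sup>2"
  define B where "B = (Re y)\<^sup>2 + (Im1 y)\<^sup>2 + (Im2 y)\<^sup>2 + (Im3 y)\<^sup>2"
  have A0: "A \<ge> 0" "B \<ge> 0" unfolding A_def B_def by simp_all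
  have c: "Re x * Re y + Im1 x * Im1 y + Im2 x * Im2 y + Im3 x * Im3 y \<le> sqrt A * sqrt B"
    unfolding A_def B_def by (rule cs4)
  have "(Re (x+y))\<^sup>2 + (Im1 (x+y))\<^sup>2 + (Im2 (x+y))\<^sup>2 + (Im3 (x+y))\<^sup>2
      = A + B + 2 * (Re x * Re y + Im1 x * Im1 y + Im2 x * Im2 y + Im3 x * Im3 y)"
    unfolding A_def B_def by (simp add: power2_eq_square algebra_simps)
  also have "\<dots> \<le> (sqrt A + sqrt B)\<^sup>2"
    using c A0 by (simp add: power2_eq_square algebra_simps)
  finally have "sqrt ((Re (x+y))\<^sup>2 + (Im1 (x+y))\<^sup>2 + (Im2 (x+y))\<^sup>2 + (Im3 (x+y))\<^sup>2) \<le> sqrt ((sqrt A + sqrt B)\<^sup>2)"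
    using real_sqrt_le_mono by blast
  then show ?thesis unfolding qnorm_def A_def[symmetric] B_def[symmetric] using A0 by simp
qed

lemma qnorm_power: "qnorm (x ^ k) = qnorm x ^ k"
  by (induction k) (simp_all add: qnorm_mult)

lemma qnorm_sum: "qnorm (\<Sum>j\<in>S. f j) \<le> (\<Sum>j\<in>S. qnorm (f j))"
proof (induction S rule: infinite_finite_induct)
  case (insert x F)
  then show ?case using qnorm_triangle[of "f x" "sum f F"] by simp
qed simp_all

theorem corollary2:
  fixes n :: nat and a :: "nat \<Rightarrow> quat" and q :: quat
  assumes "n \<ge> 3"
    and "a (n - 2) \<noteq> 0"
    and "q ^ n + (\<Sum>j\<le>n - 2. a j * q ^ j) = 0"
  shows "qnorm q \<le>
    (let lam = root n (Max {qnorm (a j) | j. j \<le> n - 2}) in \<Sum>k=1..n-1. lam ^ k)"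
proof -
  define M where "M = Max {qnorm (a j) | j. j \<le> n - 2}"
  define r where "r = qnorm q"
  define l where "l = root n M"
  have fin: "finite {qnorm (a j) | j. j \<le> n - 2}" by simp
  have Mge: "qnorm (a j) \<le> M" if "j \<le> n - 2" for j
    unfolding M_def using fin that by (intro Max_ge) auto
  have "qnorm (a (n-2)) > 0" using assms(2) qnorm_eq0 qnorm_nonneg
    by (metis less_eq_real_def)
  then have M0: "M > 0" using Mge[of "n-2"] by simp
  have r0: "r \<ge> 0" unfolding r_def by (rule qnorm_nonneg)
  have l0: "l > 0" unfolding l_def using M0 assms(1) by simp
  have ln: "l ^ n = M" unfolding l_def using M0 assms(1) by simp
  have qn: "q ^ n = - (\<Sum>j\<le>n - 2. a j * q ^ j)" using assms(3) by (simp add: eq_neg_iff_add_eq_0)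
  have key: "r ^ n \<le> (\<Sum>j\<le>n - 2. M * r ^ j)"
  proof -
    have "r ^ n = qnorm (\<Sum>j\<le>n - 2. a j * q ^ j)"
      unfolding r_def by (simp only: qnorm_power[symmetric] qn qnorm_uminus)
    also have "\<dots> \<le> (\<Sum>j\<le>n - 2. qnorm (a j * q ^ j))" by (rule qnorm_sum)
    also have "\<dots> \<le> (\<Sum>j\<le>n - 2. M * r ^ j)"
      by (rule sum_mono) (simp add: qnorm_mult qnorm_power r_def[symmetric] mult_right_mono Mge r0)
    finally show ?thesis .
  qed
  define s where "s = (\<Sum>k\<le>n-2. l ^ k)"
  have s1: "s \<ge> 1"
  proof -
    have "(\<Sum>k\<in>{0}. l ^ k) \<le> s" unfolding s_def
      by (rule sum_mono2) (use l0 in auto)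
    then show ?thesis by simp
  qed
  have S: "(\<Sum>k=1..n-1. l ^ k) = l * s"
  proof -
    have "n - 1 = Suc (n - 2)" using assms(1) by simp
    then have "(\<Sum>k=1..n-1. l ^ k) = (\<Sum>k=Suc 0..Suc (n-2). l ^ k)" by simp
    also have "\<dots> = (\<Sum>k=0..n-2. l ^ Suc k)" by (rule sum.shift_bounds_cl_Suc_ivl)
    also have "\<dots> = l * s" unfolding s_def by (simp add: sum_distrib_left atLeast0AtMost)
    finally show ?thesis .
  qed
  have "r \<le> l * s"
  proof (rule ccontr)
    assume "\<not> r \<le> l * s"
    then have rl: "r > l * s" by simp
    define t where "t = r / l"
    have rt: "r = l * t" unfolding t_def using l0 by simp
    have ts: "t > s" using rl rt l0 by simp
    have t1: "t \<ge> 1" using ts s1 by simp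
    have "(\<Sum>j\<le>n - 2. M * r ^ j) = (\<Sum>j\<le>n - 2. l ^ n * (l ^ j * t ^ j))"
      by (simp add: ln rt power_mult_distrib)
    also have "\<dots> \<le> (\<Sum>j\<le>n - 2. l ^ n * (l ^ j * t ^ (n-2)))"
      using l0 t1 by (intro sum_mono mult_left_mono power_increasing) auto
    also have "\<dots> = l ^ n * t ^ (n-2) * s"
      unfolding s_def by (simp add: sum_distrib_left sum_distrib_right algebra_simps)
    also have "\<dots> < l ^ n * t ^ (n-2) * t"
      using ts l0 t1 by simp
    also have "\<dots> \<le> l ^ n * t ^ (n-2) * t * t"
      using l0 t1 by simp
    also have "\<dots> = l ^ n * t ^ n"
    proof -
      have "n = Suc (Suc (n-2))" using assms(1) by simp
      then have "t ^ n = t ^ (n-2) * t * t" by (metis power_Suc2)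
      then show ?thesis by simp
    qed
    also have "\<dots> = r ^ n" by (simp add: rt power_mult_distrib)
    finally show False using key by simp
  qed
  then show ?thesis unfolding Let_def M_def[symmetric] l_def[symmetric] S r_def .
qed

end
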